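(* For $s\in\mathbb{R}$ let $\mathcal{H}_s=\{h(z)=\sum_{n\ge0}a_nz^n:\ \|h\|_s^2=\sum_{n\ge0}(1+n)^{-s}|a_n|^2<\infty\}$. The embedding dimension of $\mathcal{H}_0$ is $1$, and for every $s<0$ the embedding dimension of $\mathcal{H}_s$ is $\infty$.
   Context: $\mathcal{H}_s$ is a reproducing kernel Hilbert space of analytic functions on the unit disc $\mathbb{D}$ with kernel $k(z,w)=\sum_{n\ge0}(1+n)^s(z\bar w)^n$; for $s\le0$ it is an irreducible complete Pick space. The embedding dimension of an RKHS on $\mathbb{D}$ with kernel $k$ is the smallest $d\in\mathbb{N}\cup\{\infty\}$ for which there exist a map $b:\mathbb{D}\to\mathbb{B}_d$ (open unit ball of $\mathbb{C}^d$, with $\mathbb{C}^\infty=\ell^2(\mathbb{N})$) and a nowhere-vanishing $\delta:\mathbb{D}\to\mathbb{C}$ with $k(z,w)=\frac{\delta(z)\overline{\delta(w)}}{1-\langle b(z),b(w)\rangle}$. *)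

theory Defs
  imports "HOL-Analysis.Analysis" "HOL-Library.Extended_Nat"
begin

text \<open>Reproducing kernel of H_s: k_s(z,w) = sum_n (1+n)^s (z conj w)^n.\<close>
definition Hs_kernel :: "real \<Rightarrow> complex \<Rightarrow> complex \<Rightarrow> complex" where
  "Hs_kernel s z w = (\<Sum>n. complex_of_real ((1 + real n) powr s) * (z * cnj w) ^ n)"

text \<open>C^d (d finite) and l^2(N) (d = infinity) are both modelled as square-summable
  sequences nat => complex; for finite d the coordinates with index >= d vanish.\<close>
definition in_ball_d :: "enat \<Rightarrow> (nat \<Rightarrow> complex) \<Rightarrow> bool" where
  "in_ball_d d v \<longleftrightarrow> (\<forall>i. d \<le> enat i \<longrightarrow> v i = 0) \<and>
      summable (\<lambda>i. (cmod (v i))\<^sup>2) \<and> (\<Sum>i. (cmod (v i))\<^sup>2) < 1"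

definition seq_inner :: "(nat \<Rightarrow> complex) \<Rightarrow> (nat \<Rightarrow> complex) \<Rightarrow> complex" where
  "seq_inner u v = (\<Sum>i. u i * cnj (v i))"

definition embeds_in_dim :: "(complex \<Rightarrow> complex \<Rightarrow> complex) \<Rightarrow> enat \<Rightarrow> bool" where
  "embeds_in_dim k d \<longleftrightarrow> (\<exists>(b :: complex \<Rightarrow> nat \<Rightarrow> complex) (\<delta> :: complex \<Rightarrow> complex).
     (\<forall>z \<in> ball 0 1. in_ball_d d (b z) \<and> \<delta> z \<noteq> 0) \<and>
     (\<forall>z \<in> ball 0 1. \<forall>w \<in> ball 0 1.
        k z w = \<delta> z * cnj (\<delta> w) / (1 - seq_inner (b z) (b w))))"

definition embedding_dim :: "(complex \<Rightarrow> complex \<Rightarrow> complex) \<Rightarrow> enat" where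
  "embedding_dim k = (LEAST d. embeds_in_dim k d)"

end

theory Submission
  imports Defs "HOL-Library.Function_Algebras" "HOL-Complex_Analysis.Complex_Analysis"
begin


definition aa :: "real \<Rightarrow> nat \<Rightarrow> real" where "aa s n = (1 + real n) powr s"

function cc :: "real \<Rightarrow> nat \<Rightarrow> real" where
  "cc s n = (if n = 0 then 0 else aa s n - (\<Sum>k\<in>{1..<n}. cc s k * aa s (n-k)))"
  by auto
termination by (relation "Wellfounded.measure snd") auto

declare cc.simps[simp del]

lemma aa_pos: "aa s n > 0" by (simp add: aa_def)
lemma aa_0[simp]: "aa s 0 = 1" by (simp add: aa_def)
lemma aa_le1: "s \<le> 0 \<Longrightarrow> aa s n \<le> 1"
  unfolding aa_def using powr_mono[of s 0 "1 + real n"] by simp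
lemma cc_0[simp]: "cc s 0 = 0" by (simp add: cc.simps)

lemma cc_rec: assumes "n \<ge> 1" shows "aa s n = (\<Sum>k\<in>{1..n}. cc s k * aa s (n-k))"
proof -
  have "{1..n} = insert n {1..<n}" using assms by auto
  hence "(\<Sum>k\<in>{1..n}. cc s k * aa s (n-k)) = cc s n + (\<Sum>k\<in>{1..<n}. cc s k * aa s (n-k))"
    by simp
  also have "cc s n = aa s n - (\<Sum>k\<in>{1..<n}. cc s k * aa s (n-k))"
    using assms by (subst cc.simps) simp
  finally show ?thesis by simp
qed

lemma ratio_mono: assumes "s < 0" "m < m'"
  shows "aa s (Suc m) / aa s m < aa s (Suc m') / aa s m'"
proof -
  have e: "aa s (Suc k) / aa s k = ((real k + 2) / (real k + 1)) powr s" for k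
    unfolding aa_def by (simp add: powr_divide add.commute add.left_commute)
  have "(real m' + 2) / (real m' + 1) < (real m + 2) / (real m + 1)"
    using assms(2) by (simp add: field_simps)
  moreover have "0 < (real m' + 2) / (real m' + 1)" by simp
  ultimately show ?thesis unfolding e using powr_less_mono2_neg[OF assms(1)] by blast
qed

lemma cc_pos: assumes "s < 0" shows "n \<ge> 1 \<Longrightarrow> cc s n > 0"
proof (induction n rule: less_induct)
  case (less n)
  show ?case
  proof (cases "n = 1")
    case True
    then show ?thesis by (simp add: cc.simps aa_pos)
  next
    case False
    then obtain m where m: "n = Suc m" "m \<ge> 1" using less.prems by (cases n) auto
    define r where "r = aa s (Suc m) / aa s m"
    have "cc s n = aa s (Suc m) - (\<Sum>k\<in>{1..m}. cc s k * aa s (Suc m - k))"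
      using m by (subst cc.simps) (simp add: atLeastLessThanSuc_atLeastAtMost)
    also have "aa s (Suc m) = r * aa s m" unfolding r_def using aa_pos[of s m] by simp
    also have "\<dots> = (\<Sum>k\<in>{1..m}. cc s k * (r * aa s (m - k)))"
      using cc_rec[OF m(2), of s] by (simp add: sum_distrib_left algebra_simps)
    finally have eq: "cc s n = (\<Sum>k\<in>{1..m}. cc s k * (r * aa s (m - k) - aa s (Suc m - k)))"
      by (simp add: sum_subtractf algebra_simps)
    have "(\<Sum>k\<in>{1..m}. cc s k * (r * aa s (m - k) - aa s (Suc m - k))) > 0"
    proof (rule sum_pos)
      fix k assume k: "k \<in> {1..m}"
      have "cc s k > 0" using less.IH[of k] k m by auto
      moreover have "aa s (Suc (m-k)) / aa s (m-k) < r"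
        unfolding r_def using ratio_mono[OF assms, of "m-k" m] k by auto
      hence "aa s (Suc m - k) < r * aa s (m - k)"
        using aa_pos[of s "m-k"] k by (simp add: Suc_diff_le field_simps)
      ultimately show "cc s k * (r * aa s (m - k) - aa s (Suc m - k)) > 0" by simp
    qed (use m in auto)
    then show ?thesis using eq by simp
  qed
qed

lemma cc_nonneg: "s < 0 \<Longrightarrow> cc s n \<ge> 0"
  using cc_pos[of s n] by (cases n) auto

lemma cc_le1: assumes "s < 0" shows "cc s n \<le> 1"
proof (cases "n = 0")
  case False
  hence "cc s n * aa s (n - n) \<le> (\<Sum>k\<in>{1..n}. cc s k * aa s (n-k))"
    by (intro member_le_sum) (auto intro!: mult_nonneg_nonneg cc_nonneg[OF assms] less_imp_le[OF aa_pos])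
  then show ?thesis using cc_rec[of n s] aa_le1[of s n] assms False by simp
qed simp

lemma cc_rec2: assumes "n \<ge> 1" shows "aa s n = (\<Sum>i<n. aa s i * cc s (n - i))"
proof -
  have "(\<Sum>i<n. aa s i * cc s (n - i)) = (\<Sum>k\<in>{1..n}. cc s k * aa s (n-k))"
    by (rule sum.reindex_bij_witness[where i="\<lambda>k. n - k" and j="\<lambda>i. n - i"]) auto
  then show ?thesis using cc_rec[OF assms] by simp
qed



definition FF :: "real \<Rightarrow> 'a::{real_normed_field,banach} \<Rightarrow> 'a" where
  "FF s x = (\<Sum>n. of_real (aa s n) * x ^ n)"
definition GG :: "real \<Rightarrow> 'a::{real_normed_field,banach} \<Rightarrow> 'a" where
  "GG s x = (\<Sum>n. of_real (cc s n) * x ^ n)"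

lemma Hs_FF: "Hs_kernel s z w = FF s (z * cnj w)"
  unfolding Hs_kernel_def FF_def aa_def by simp

lemma sum_aa: assumes "s \<le> 0" "norm (x::'a::{real_normed_field,banach}) < 1"
  shows "summable (\<lambda>n. norm (of_real (aa s n) * x ^ n))"
proof (rule summable_comparison_test[OF _ summable_geometric[of "norm x"]])
  show "\<exists>N. \<forall>n\<ge>N. norm (norm (of_real (aa s n) * x ^ n)) \<le> norm x ^ n"
  proof (intro exI allI impI)
    fix n :: nat
    show "norm (norm (of_real (aa s n) * x ^ n)) \<le> norm x ^ n"
      using aa_le1[OF assms(1), of n] aa_pos[of s n] by (simp add: norm_mult norm_power mult_left_le_one_le)
  qed
qed (use assms in auto)

lemma sum_cc: assumes "s < 0" "norm (x::'a::{real_normed_field,banach}) < 1"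
  shows "summable (\<lambda>n. norm (of_real (cc s n) * x ^ n))"
proof (rule summable_comparison_test[OF _ summable_geometric[of "norm x"]])
  show "\<exists>N. \<forall>n\<ge>N. norm (norm (of_real (cc s n) * x ^ n)) \<le> norm x ^ n"
  proof (intro exI allI impI)
    fix n :: nat
    show "norm (norm (of_real (cc s n) * x ^ n)) \<le> norm x ^ n"
      using cc_le1[OF assms(1), of n] cc_nonneg[OF assms(1), of n] by (simp add: norm_mult norm_power mult_left_le_one_le)
  qed
qed (use assms in auto)

lemma FG: assumes "s < 0" "norm (x::'a::{real_normed_field,banach}) < 1"
  shows "FF s x * (1 - GG s x) = 1"
proof -
  define b where "b n = (0::'a) ^ n - of_real (cc s n) * x ^ n" for n
  have zs: "(\<lambda>n. (0::'a) ^ n) sums 1" using powser_sums_zero[of "\<lambda>_. 1::'a"] by (simp only: mult_1_left)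
  have sG: "summable (\<lambda>n. of_real (cc s n) * x ^ n)"
    by (rule summable_norm_cancel[OF sum_cc[OF assms]])
  have bs: "b sums (1 - GG s x)" unfolding b_def GG_def
    using sums_diff[OF zs summable_sums[OF sG]] .
  have nb: "summable (\<lambda>n. norm (b n))"
  proof -
    have s0: "summable (\<lambda>n. norm ((0::'a) ^ n))" using zs
      by (simp add: summable_0_powser norm_power) 
    have tri: "norm (norm (b n)) \<le> norm ((0::'a)^n) + norm (of_real (cc s n) * x ^ n)" for n
      unfolding b_def real_norm_def abs_norm_cancel by (rule norm_triangle_ineq4)
    show ?thesis
      by (rule summable_comparison_test'[OF summable_add[OF s0 sum_cc[OF assms]]], rule tri)
  qed
  have "FF s x * (1 - GG s x) = (\<Sum>k. \<Sum>i\<le>k. (of_real (aa s i) * x ^ i) * b (k - i))"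
    unfolding FF_def sums_unique[OF bs]
    by (rule Cauchy_product[OF sum_aa[OF less_imp_le[OF assms(1)] assms(2)] nb])
  also have "\<dots> = (\<Sum>k. (0::'a) ^ k)"
  proof (rule arg_cong[where f=suminf], rule ext)
    fix k
    show "(\<Sum>i\<le>k. (of_real (aa s i) * x ^ i) * b (k - i)) = (0::'a) ^ k"
    proof (cases "k = 0")
      case True then show ?thesis by (simp add: b_def)
    next
      case False
      have "(\<Sum>i\<le>k. (of_real (aa s i) * x ^ i) * b (k - i))
          = (\<Sum>i<k. (of_real (aa s i) * x ^ i) * b (k - i)) + of_real (aa s k) * x ^ k * b 0"
        by (simp add: lessThan_Suc_atMost[symmetric])
      also have "(\<Sum>i<k. (of_real (aa s i) * x ^ i) * b (k - i))
          = - (x ^ k * of_real (\<Sum>i<k. aa s i * cc s (k - i)))"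
        unfolding b_def of_real_sum sum_distrib_left sum_negf[symmetric]
      proof (rule sum.cong)
        fix i assume i: "i \<in> {..<k}"
        have p: "x ^ k = x ^ i * x ^ (k - i)" using i by (simp add: power_add[symmetric])
        have z: "(0::'a) ^ (k - i) = 0" using i by simp
        show "of_real (aa s i) * x ^ i * ((0::'a) ^ (k - i) - of_real (cc s (k - i)) * x ^ (k - i))
              = - (x ^ k * of_real (aa s i * cc s (k - i)))"
          unfolding p z of_real_mult by (simp add: algebra_simps)
      qed simp
      also have "(\<Sum>i<k. aa s i * cc s (k - i)) = aa s k" using cc_rec2[of k s] False by simp
      finally show ?thesis using False by (simp add: b_def)
    qed
  qed
  also have "\<dots> = 1" using sums_unique[OF zs] by simp
  finally show ?thesis .
qed

lemma FF_ge1: assumes "s < 0" "0 \<le> r" "r < 1" shows "FF s (r::real) \<ge> 1"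
proof -
  have sm: "summable (\<lambda>n. aa s n * r ^ n)"
    using sum_aa[of s r] assms summable_norm_cancel by force
  have "(\<Sum>n\<in>{0}. aa s n * r ^ n) \<le> (\<Sum>n. aa s n * r ^ n)"
    by (rule sum_le_suminf[OF sm]) (use assms in \<open>auto intro!: mult_nonneg_nonneg simp: aa_pos less_imp_le\<close>)
  then show ?thesis unfolding FF_def by simp
qed

lemma GG_lt1: assumes "s < 0" "0 \<le> r" "r < 1" shows "GG s (r::real) < 1"
proof -
  have "FF s r * (1 - GG s r) = 1" using FG[of s r] assms by simp
  moreover have "FF s r \<ge> 1" using FF_ge1[OF assms] .
  ultimately have "1 - GG s r = 1 / FF s r" by (simp add: field_simps)
  moreover have "1 / FF s r > 0" using \<open>FF s r \<ge> 1\<close> by simp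
  ultimately have "1 - GG s r > 0" by simp
  then show ?thesis by simp
qed



lemma vander:
  fixes Z :: "real set" and u :: "real \<Rightarrow> complex"
  assumes "finite Z" "Z \<subseteq> {0<..}" "\<forall>n. (\<Sum>z\<in>Z. u z * complex_of_real z ^ n) = 0"
  shows "\<forall>z\<in>Z. u z = 0"
  using assms
proof (induction Z rule: finite_linorder_max_induct)
  case empty then show ?case by simp
next
  case (insert b A)
  have bpos: "b > 0" using insert.prems by auto
  have lim: "(\<lambda>n. \<Sum>z\<in>A. u z * complex_of_real (z/b) ^ n) \<longlonglongrightarrow> 0"
  proof (rule tendsto_null_sum)
    fix z assume z: "z \<in> A"
    have "0 < z" "z < b" using z insert by auto
    hence "norm (complex_of_real (z/b)) < 1" unfolding norm_of_real using bpos by (simp add: abs_of_pos)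
    then show "(\<lambda>n. u z * complex_of_real (z/b) ^ n) \<longlonglongrightarrow> 0"
      by (intro tendsto_mult_right_zero LIMSEQ_power_zero)
  qed
  have eq: "u b + (\<Sum>z\<in>A. u z * complex_of_real (z/b) ^ n) = 0" for n
  proof -
    have "b \<notin> A" using insert by auto
    have "0 = (\<Sum>z\<in>insert b A. u z * complex_of_real z ^ n) / complex_of_real b ^ n"
      using insert.prems by simp
    also have "\<dots> = u b + (\<Sum>z\<in>A. u z * complex_of_real (z/b) ^ n)"
      using \<open>b \<notin> A\<close> insert.hyps(1) bpos
      by (simp add: add_divide_distrib sum_divide_distrib power_divide)
    finally show ?thesis by simp
  qed
  have "(\<lambda>n. u b + (\<Sum>z\<in>A. u z * complex_of_real (z/b) ^ n)) \<longlonglongrightarrow> u b + 0"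
    by (intro tendsto_add tendsto_const lim)
  then have ub: "u b = 0" unfolding eq by (simp add: LIMSEQ_const_iff)
  have bA: "b \<notin> A" using insert.hyps by auto
  have "(\<Sum>z\<in>A. u z * complex_of_real z ^ n) = 0" for n
    using insert.prems(2)[rule_format, of n] insert.hyps(1) bA ub by simp
  then have IH: "\<forall>z\<in>A. u z = 0" using insert.IH insert.prems(1) by blast
  show ?case using IH ub by simp
qed

lemma powser_unique0:
  fixes E :: "nat \<Rightarrow> complex"
  assumes "\<And>x. norm x < 1 \<Longrightarrow> (\<lambda>n. E n * x ^ n) sums 0"
  shows "E m = 0"
proof (rule ccontr)
  assume nz: "E m \<noteq> 0"
  show False
  proof (cases "m = 0")
    case True
    from assms[of 0] have "E 0 = 0" by simp
    then show False using nz True by simp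
  next
    case False
    have sm': "\<And>x. norm (x - 0) < 1 \<Longrightarrow> (\<lambda>n. E n * (x - 0) ^ n) sums ((\<lambda>_. 0::complex) x)"
      using assms by simp
    show False
    proof (rule powser_0_nonzero[of 1 0 E "\<lambda>_. 0" m, OF _ sm' _ nz])
      fix r :: real assume r: "0 < r" and rr: "\<And>z::complex. z \<in> cball 0 r - {0} \<Longrightarrow> (\<lambda>_. 0::complex) z \<noteq> 0"
      have "complex_of_real r \<in> cball 0 r - {0}" using r by auto
      then show False using rr by blast
    qed (use False in auto)
  qed
qed

lemma core:
  fixes Z :: "real set" and u :: "real \<Rightarrow> complex"
  assumes s: "s < 0" and fin: "finite Z" and Zs: "Z \<subseteq> {0<..<1}"
    and h: "\<forall>w\<in>ball 0 1. (\<Sum>z\<in>Z. u z * (1 - GG s (complex_of_real z * cnj w))) = 0"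
  shows "\<forall>z\<in>Z. u z = 0"
proof -
  define E where "E n = (\<Sum>z\<in>Z. u z * ((0::complex) ^ n - of_real (cc s n) * complex_of_real z ^ n))" for n
  have sm: "(\<lambda>n. E n * x ^ n) sums 0" if x: "norm x < 1" for x :: complex
  proof -
    have each: "(\<lambda>n. u z * (((0::complex) ^ n - of_real (cc s n) * complex_of_real z ^ n) * x ^ n))
                  sums (u z * (1 - GG s (complex_of_real z * x)))" if z: "z \<in> Z" for z
    proof -
      have zx: "norm (complex_of_real z * x) < 1"
        using z Zs x mult_left_le_one_le[of "norm x" "\<bar>z\<bar>"] by (auto simp: norm_mult)
      have h1: "(\<lambda>n. (0::complex) ^ n * x ^ n) sums 1"
        using powser_sums_zero[of "\<lambda>n. x ^ n"] by (simp add: mult.commute)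
      have h2: "(\<lambda>n. of_real (cc s n) * (complex_of_real z * x) ^ n) sums GG s (complex_of_real z * x)"
        unfolding GG_def by (rule summable_sums[OF summable_norm_cancel[OF sum_cc[OF s zx]]])
      have "(\<lambda>n. (0::complex) ^ n * x ^ n - of_real (cc s n) * (complex_of_real z * x) ^ n)
              sums (1 - GG s (complex_of_real z * x))"
        by (rule sums_diff[OF h1 h2])
      then have "(\<lambda>n. ((0::complex) ^ n - of_real (cc s n) * complex_of_real z ^ n) * x ^ n)
              sums (1 - GG s (complex_of_real z * x))"
        by (simp only: left_diff_distrib power_mult_distrib mult.assoc)
      then show ?thesis by (rule sums_mult)
    qed
    have "(\<lambda>n. \<Sum>z\<in>Z. u z * (((0::complex) ^ n - of_real (cc s n) * complex_of_real z ^ n) * x ^ n))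
          sums (\<Sum>z\<in>Z. u z * (1 - GG s (complex_of_real z * x)))"
      by (rule sums_sum[OF each])
    moreover have "(\<Sum>z\<in>Z. u z * (1 - GG s (complex_of_real z * x))) = 0"
      using h[rule_format, of "cnj x"] x by simp
    moreover have "(\<Sum>z\<in>Z. u z * (((0::complex) ^ n - of_real (cc s n) * complex_of_real z ^ n) * x ^ n))
                   = E n * x ^ n" for n
      unfolding E_def sum_distrib_right by (simp only: mult.assoc)
    ultimately show ?thesis by simp
  qed
  have E0: "E n = 0" for n by (rule powser_unique0[OF sm])
  have "(\<Sum>z\<in>Z. u z * complex_of_real z ^ n) = 0" for n
  proof (cases "n = 0")
    case True
    then show ?thesis using E0[of 0] by (simp add: E_def)
  next
    case False
    have "E n = - of_real (cc s n) * (\<Sum>z\<in>Z. u z * complex_of_real z ^ n)"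
      using False unfolding E_def sum_distrib_left by (intro sum.cong) (auto simp: algebra_simps)
    moreover have "cc s n \<noteq> 0" using cc_pos[OF s, of n] False by simp
    ultimately show ?thesis using E0[of n] by simp
  qed
  moreover have "Z \<subseteq> {0<..}" using Zs by auto
  ultimately show ?thesis using vander[OF fin, of u] by blast
qed



lemma fun_sum_apply: "(sum f A) x = (\<Sum>a\<in>A. f a x)"
  by (induction A rule: infinite_finite_induct) auto

lemma aux_div: "D \<noteq> 0 \<Longrightarrow> P \<noteq> 0 \<Longrightarrow> P / D * X = (1::complex) \<Longrightarrow> X = D / P"
  by (simp add: field_simps)

lemma aux2: "(1 - (\<Sum>i<d. f i * g i)) / (p * q) = (1 / p) * (1 / q) + (\<Sum>i<d. (- f i / p) * (g i / q :: complex))"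
proof -
  have "(\<Sum>i<d. (- f i / p) * (g i / q)) = - ((\<Sum>i<d. f i * g i) / (p * q))"
    unfolding sum_divide_distrib sum_negf[symmetric] by (rule sum.cong) auto
  then show ?thesis by (simp add: diff_divide_distrib)
qed

lemma seq_inner_fin:
  assumes "\<forall>i. enat d \<le> enat i \<longrightarrow> u i = 0"
  shows "seq_inner u v = (\<Sum>i<d. u i * cnj (v i))"
  unfolding seq_inner_def
  by (rule suminf_finite) (use assms in auto)

lemma not_embeds_fin:
  assumes s: "s < 0"
  shows "\<not> embeds_in_dim (Hs_kernel s) (enat d)"
proof
  assume "embeds_in_dim (Hs_kernel s) (enat d)"
  then obtain b :: "complex \<Rightarrow> nat \<Rightarrow> complex" and \<delta> :: "complex \<Rightarrow> complex" where
    bd: "\<forall>z \<in> ball 0 1. in_ball_d (enat d) (b z) \<and> \<delta> z \<noteq> 0" and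
    eqk: "\<forall>z \<in> ball 0 1. \<forall>w \<in> ball 0 1. Hs_kernel s z w = \<delta> z * cnj (\<delta> w) / (1 - seq_inner (b z) (b w))"
    unfolding embeds_in_dim_def by blast
  interpret fv: vector_space "\<lambda>(c::complex) (f::complex\<Rightarrow>complex). (\<lambda>x. c * f x)"
    by unfold_locales (auto simp: fun_eq_iff algebra_simps)
  have key: "1 - GG s (z * cnj w) = (1 - (\<Sum>i<d. b z i * cnj (b w i))) / (\<delta> z * cnj (\<delta> w))"
    if z: "z \<in> ball 0 1" and w: "w \<in> ball 0 1" for z w
  proof -
    have nz: "norm (z * cnj w) < 1" using z w mult_left_le_one_le[of "cmod w" "cmod z"]
      by (auto simp: norm_mult)
    have fg: "FF s (z * cnj w) * (1 - GG s (z * cnj w)) = 1" by (rule FG[OF s nz])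
    have si: "seq_inner (b z) (b w) = (\<Sum>i<d. b z i * cnj (b w i))"
      by (rule seq_inner_fin) (use bd z in \<open>auto simp: in_ball_d_def\<close>)
    have k: "FF s (z * cnj w) = \<delta> z * cnj (\<delta> w) / (1 - (\<Sum>i<d. b z i * cnj (b w i)))"
      using eqk z w si by (simp add: Hs_FF)
    have dz: "\<delta> z \<noteq> 0" "\<delta> w \<noteq> 0" using bd z w by auto
    have "1 - (\<Sum>i<d. b z i * cnj (b w i)) \<noteq> 0"
    proof
      assume "1 - (\<Sum>i<d. b z i * cnj (b w i)) = 0"
      then have "FF s (z * cnj w) = 0" using k by simp
      then show False using fg by simp
    qed
    moreover have "\<delta> z * cnj (\<delta> w) \<noteq> 0" using dz by simp
    ultimately show ?thesis using fg unfolding k by (rule aux_div)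
  qed
  define \<psi> where "\<psi> z = (\<lambda>w. if w \<in> ball 0 1 then 1 - GG s (complex_of_real z * cnj w) else 0)" for z :: real
  define U0 where "U0 = (\<lambda>w. if w \<in> ball 0 1 then 1 / cnj (\<delta> w) else 0)"
  define U where "U i = (\<lambda>w. if w \<in> ball 0 1 then cnj (b w i) / cnj (\<delta> w) else 0)" for i
  define B where "B = insert U0 (U ` {..<d})"
  have finB: "finite B" unfolding B_def by simp
  have cardB: "card B \<le> Suc d"
  proof -
    have "card B \<le> Suc (card (U ` {..<d}))" unfolding B_def by (simp add: card_insert_if)
    also have "card (U ` {..<d}) \<le> d" using card_image_le[of "{..<d}" U] by simp
    finally show ?thesis by simp
  qed
  have inspan: "\<psi> z \<in> fv.span B" if z: "0 < z" "z < 1" for z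
  proof -
    define zc where "zc = complex_of_real z"
    have zb: "zc \<in> ball 0 1" using z by (simp add: zc_def)
    have "\<psi> z = (\<lambda>x. (1 / \<delta> zc) * U0 x) + (\<Sum>i<d. (\<lambda>x. (- b zc i / \<delta> zc) * U i x))"
    proof (rule ext)
      fix w
      show "\<psi> z w = ((\<lambda>x. (1 / \<delta> zc) * U0 x) + (\<Sum>i<d. (\<lambda>x. (- b zc i / \<delta> zc) * U i x))) w"
      proof (cases "w \<in> ball 0 1")
        case True
        have "\<psi> z w = (1 - (\<Sum>i<d. b zc i * cnj (b w i))) / (\<delta> zc * cnj (\<delta> w))"
          using key[OF zb True] True by (simp add: \<psi>_def zc_def)
        also have "\<dots> = (1 / \<delta> zc) * (1 / cnj (\<delta> w)) + (\<Sum>i<d. (- b zc i / \<delta> zc) * (cnj (b w i) / cnj (\<delta> w)))"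
          by (rule aux2)
        finally show ?thesis using True by (simp add: fun_sum_apply U0_def U_def)
      qed (simp add: \<psi>_def fun_sum_apply U0_def U_def)
    qed
    also have "\<dots> \<in> fv.span B"
      by (intro fv.span_add fv.span_scale fv.span_sum fv.span_base) (auto simp: B_def)
    finally show ?thesis .
  qed
  define Z where "Z = (\<lambda>j. 1 / (real j + 2)) ` {..<d+2}"
  have Zs: "Z \<subseteq> {0<..<1}" unfolding Z_def by auto
  have finZ: "finite Z" unfolding Z_def by simp
  have cardZ: "card Z = d + 2"
    unfolding Z_def by (subst card_image) (auto simp: inj_on_def)
  have comb: "\<forall>z\<in>Z'. u z = 0" if "Z' \<subseteq> Z" "(\<Sum>z\<in>Z'. (\<lambda>x. u z * \<psi> z x)) = 0" for Z' u
  proof (rule core[OF s])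
    show "finite Z'" using finZ that(1) finite_subset by blast
    show "Z' \<subseteq> {0<..<1}" using that(1) Zs by blast
    show "\<forall>w\<in>ball 0 1. (\<Sum>z\<in>Z'. u z * (1 - GG s (complex_of_real z * cnj w))) = 0"
    proof
      fix w :: complex assume w: "w \<in> ball 0 1"
      have "(\<Sum>z\<in>Z'. (\<lambda>x. u z * \<psi> z x)) w = 0" using that(2) by simp
      then show "(\<Sum>z\<in>Z'. u z * (1 - GG s (complex_of_real z * cnj w))) = 0"
        using w by (simp add: fun_sum_apply \<psi>_def)
    qed
  qed
  have inj: "inj_on \<psi> Z"
  proof (rule inj_onI)
    fix x y assume xy: "x \<in> Z" "y \<in> Z" "\<psi> x = \<psi> y"
    show "x = y"
    proof (rule ccontr)
      assume ne: "x \<noteq> y"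
      define u where "u z = (if z = x then 1 else -1 :: complex)" for z
      have "(\<Sum>z\<in>{x,y}. (\<lambda>t. u z * \<psi> z t)) = 0"
        using ne xy(3) by (simp add: u_def fun_eq_iff)
      then have "\<forall>z\<in>{x,y}. u z = 0" using comb[of "{x,y}" u] xy by blast
      then show False by (simp add: u_def)
    qed
  qed
  have indep: "fv.independent (\<psi> ` Z)"
    unfolding fv.independent_explicit_finite_subsets
  proof (intro allI impI)
    fix S u assume S: "S \<subseteq> \<psi> ` Z" "finite S" and su: "(\<Sum>v\<in>S. (\<lambda>x. u v * v x)) = 0"
    define Z' where "Z' = {z\<in>Z. \<psi> z \<in> S}"
    have SZ: "S = \<psi> ` Z'" using S(1) unfolding Z'_def by auto
    have ij: "inj_on \<psi> Z'" using inj unfolding Z'_def by (rule inj_on_subset) auto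
    have "(\<Sum>z\<in>Z'. (\<lambda>x. u (\<psi> z) * \<psi> z x)) = 0"
      using su unfolding SZ sum.reindex[OF ij] by (simp add: comp_def)
    then have "\<forall>z\<in>Z'. u (\<psi> z) = 0" using comb[of Z' "\<lambda>z. u (\<psi> z)"] unfolding Z'_def by blast
    then show "\<forall>v\<in>S. u v = 0" unfolding SZ by blast
  qed
  have "\<psi> ` Z \<subseteq> fv.span B" using inspan Zs by auto
  then have "card (\<psi> ` Z) \<le> card B" using fv.independent_span_bound[OF finB indep] by blast
  moreover have "card (\<psi> ` Z) = d + 2" using card_image[OF inj] cardZ by simp
  ultimately show False using cardB by simp
qed



lemma embeds_inf:
  assumes s: "s < 0"
  shows "embeds_in_dim (Hs_kernel s) \<infinity>"
  unfolding embeds_in_dim_def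
proof (intro exI conjI ballI)
  define b where "b z i = complex_of_real (sqrt (cc s i)) * z ^ i" for z :: complex and i
  have nn: "0 \<le> cc s i" for i using cc_nonneg[OF s] .
  fix z :: complex assume z: "z \<in> ball 0 1"
  define r where "r = (cmod z)^2"
  have r: "0 \<le> r" "r < 1" using z unfolding r_def by (auto simp: power_less_one_iff abs_square_less_1)
  have eqn: "(\<lambda>i. (cmod (b z i))\<^sup>2) = (\<lambda>i. cc s i * r ^ i)"
    using nn by (auto simp: b_def r_def norm_mult norm_power power_mult_distrib power_mult[symmetric] mult.commute[of 2])
  have sm: "summable (\<lambda>i. cc s i * r ^ i)"
    using summable_norm_cancel[OF sum_cc[OF s, of r]] r by simp
  have "(\<Sum>i. cc s i * r ^ i) < 1" using GG_lt1[OF s r] unfolding GG_def by simp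
  then show "in_ball_d \<infinity> (b z)" unfolding in_ball_d_def eqn using sm by simp
  show "(1::complex) \<noteq> 0" by simp
next
  fix z w :: complex assume z: "z \<in> ball 0 1" and w: "w \<in> ball 0 1"
  define b where "b z i = complex_of_real (sqrt (cc s i)) * z ^ i" for z :: complex and i
  have nn: "0 \<le> cc s i" for i using cc_nonneg[OF s] .
  have nz: "norm (z * cnj w) < 1" using z w mult_left_le_one_le[of "cmod w" "cmod z"]
    by (auto simp: norm_mult)
  have "seq_inner (b z) (b w) = GG s (z * cnj w)"
    unfolding seq_inner_def GG_def b_def
  proof (rule arg_cong[where f=suminf], rule ext)
    fix i
    have "complex_of_real (sqrt (cc s i)) * complex_of_real (sqrt (cc s i)) = complex_of_real (cc s i)"
      using nn[of i] by (simp flip: of_real_mult)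
    then show "complex_of_real (sqrt (cc s i)) * z ^ i * cnj (complex_of_real (sqrt (cc s i)) * w ^ i) =
          complex_of_real (cc s i) * (z * cnj w) ^ i"
      by (simp add: power_mult_distrib algebra_simps)
  qed
  moreover have fg: "FF s (z * cnj w) * (1 - GG s (z * cnj w)) = 1" by (rule FG[OF s nz])
  moreover have "1 - GG s (z * cnj w) \<noteq> 0"
  proof
    assume "1 - GG s (z * cnj w) = 0"
    then show False using fg by simp
  qed
  ultimately show "Hs_kernel s z w = 1 * cnj 1 / (1 - seq_inner (b z) (b w))"
    unfolding Hs_FF by (simp add: eq_divide_eq)
qed

lemma Hs0: "norm (z * cnj w) < 1 \<Longrightarrow> Hs_kernel 0 z w = 1 / (1 - z * cnj w)"
  unfolding Hs_kernel_def by (simp add: suminf_geometric)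

lemma embeds0_1: "embeds_in_dim (Hs_kernel 0) 1"
  unfolding embeds_in_dim_def
proof (intro exI conjI ballI)
  define b where "b z i = (if i = 0 then z else 0)" for z :: complex and i :: nat
  fix z :: complex assume z: "z \<in> ball 0 1"
  have eqn: "(\<lambda>i. (cmod (b z i))\<^sup>2) = (\<lambda>i. if i = 0 then (cmod z)^2 else 0)"
    by (auto simp: b_def)
  have "(\<lambda>i. (cmod (b z i))\<^sup>2) sums (cmod z)^2" unfolding eqn
    using sums_single[of 0 "\<lambda>_. (cmod z)^2"] by simp
  moreover have "(cmod z)^2 < 1" using z by (simp add: power_less_one_iff abs_square_less_1)
  ultimately show "in_ball_d 1 (b z)" unfolding in_ball_d_def
    by (auto simp: b_def sums_iff one_enat_def)
  show "(1::complex) \<noteq> 0" by simp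
next
  define b where "b z i = (if i = 0 then z else 0)" for z :: complex and i :: nat
  fix z w :: complex assume z: "z \<in> ball 0 1" and w: "w \<in> ball 0 1"
  have nz: "norm (z * cnj w) < 1" using z w mult_left_le_one_le[of "cmod w" "cmod z"]
    by (auto simp: norm_mult)
  have "seq_inner (b z) (b w) = z * cnj w"
  proof -
    have "(\<lambda>i. b z i * cnj (b w i)) = (\<lambda>i. if i = 0 then z * cnj w else 0)" by (auto simp: b_def)
    then show ?thesis unfolding seq_inner_def
      using sums_unique[OF sums_single[of 0 "\<lambda>_. z * cnj w"]] by simp
  qed
  then show "Hs_kernel 0 z w = 1 * cnj 1 / (1 - seq_inner (b z) (b w))"
    using Hs0[OF nz] by simp
qed

lemma not_embeds0_0: "\<not> embeds_in_dim (Hs_kernel 0) 0"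
proof
  assume "embeds_in_dim (Hs_kernel 0) 0"
  then obtain b :: "complex \<Rightarrow> nat \<Rightarrow> complex" and \<delta> :: "complex \<Rightarrow> complex" where
    bd: "\<forall>z \<in> ball 0 1. in_ball_d 0 (b z) \<and> \<delta> z \<noteq> 0" and
    eqk: "\<forall>z \<in> ball 0 1. \<forall>w \<in> ball 0 1. Hs_kernel 0 z w = \<delta> z * cnj (\<delta> w) / (1 - seq_inner (b z) (b w))"
    unfolding embeds_in_dim_def by blast
  have b0: "b z = (\<lambda>_. 0)" if "z \<in> ball 0 1" for z
    using bd that by (auto simp: in_ball_d_def zero_enat_def)
  have k: "Hs_kernel 0 z w = \<delta> z * cnj (\<delta> w)" if "z \<in> ball 0 1" "w \<in> ball 0 1" for z w
    using eqk that b0[OF that(1)] by (simp add: seq_inner_def)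
  define h where "h = (1/2 :: complex)"
  have hb: "h \<in> ball 0 1" "(0::complex) \<in> ball 0 1" by (auto simp: h_def)
  have e1: "\<delta> 0 * cnj (\<delta> 0) = 1" using k[OF hb(2) hb(2)] Hs0[of 0 0] by simp
  have e2: "\<delta> 0 * cnj (\<delta> h) = 1" using k[OF hb(2) hb(1)] Hs0[of 0 h] by simp
  have e3: "\<delta> h * cnj (\<delta> h) = 4/3"
    using k[OF hb(1) hb(1)] Hs0[of h h] by (simp add: h_def)
  have "cnj (\<delta> h) = cnj (\<delta> 0)" using e1 e2 bd hb(2)
    by (metis mult_left_cancel)
  then have "\<delta> h = \<delta> 0" by (metis complex_cnj_cnj)
  then show False using e1 e3 by simp
qed

theorem theorem1p11:
  shows "embedding_dim (Hs_kernel 0) = 1 \<and>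
         (\<forall>s::real. s < 0 \<longrightarrow> embedding_dim (Hs_kernel s) = \<infinity>)"
proof (intro conjI allI impI)
  show "embedding_dim (Hs_kernel 0) = 1"
    unfolding embedding_dim_def
  proof (rule Least_equality)
    show "embeds_in_dim (Hs_kernel 0) 1" by (rule embeds0_1)
  next
    fix y assume "embeds_in_dim (Hs_kernel 0) y"
    then have "y \<noteq> 0" using not_embeds0_0 by auto
    then show "1 \<le> y" by (cases y) (auto simp: one_enat_def zero_enat_def)
  qed
next
  fix s :: real assume s: "s < 0"
  show "embedding_dim (Hs_kernel s) = \<infinity>"
    unfolding embedding_dim_def
  proof (rule Least_equality)
    show "embeds_in_dim (Hs_kernel s) \<infinity>" by (rule embeds_inf[OF s])
  next
    fix y assume "embeds_in_dim (Hs_kernel s) y"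
    then show "\<infinity> \<le> y" using not_embeds_fin[OF s] by (cases y) auto
  qed
qed

end
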